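(* In the two-period difference-in-differences setting with anticipation described in the context, suppose $\mu_g$ and $\tau_g$ have different signs. Let $t^*$ satisfy $\Phi(t^* )-\Phi(-t^*/2)=\alpha$, where $\Phi$ is the standard normal CDF, and consider testing $H_0:\mu_g=0$ at level $\alpha$ using the confidence set $CS^\mu_\alpha$ defined in the context. If the t-statistic from the difference-in-differences model without anticipation, $\tilde t=\sqrt{n}\,\hat m_g/\hat\sigma_u$, satisfies $|\tilde t|>t^*$, then for any $\pi$, $0\notin CS^\mu_\alpha$.
   Context: Two periods $t\in\{0,1\}$, i.i.d. units $i=1,\dots,n$, observed treatment $D_i\in\{0,1\}$, unobserved anticipation $A_i\in\{0,1\}$, observed outcomes $Y_{i0},Y_{i1}$, known function $g$. $\mu_g=\mathbb{E}[g(Y_{i1}(1))-g(Y_{i1}(0))\mid D_i=1]$ is the treatment effect on the treated and $\tau_g=\mathbb{E}[g(Y_{i0}(1,1))-g(Y_{i0}(0,1))\mid D_i=1,A_i=1]$ the anticipatory effect, where $Y_{i0}(a,1)$ is the period-0 potential outcome of a treated unit with anticipation status $a$. When $\mu_g$ and $\tau_g$ have different signs, the identified set for $\mu_g$ is the interval with endpoints $m_g/(1+\pi)$ and $m_g$, where $m_g=\mathbb{E}[g(Y_{i1})-g(Y_{i0})\mid D_i=1]-\mathbb{E}[g(Y_{i1})-g(Y_{i0})\mid D_i=0]$ and $\pi\in(0,1)$ bounds $\mathbb{P}[A_i=1\mid D_i=1]$. Let $\hat m_g=\frac1{n_1}\sum_i[g(Y_{i1})-g(Y_{i0})]D_i-\frac1{n_0}\sum_i[g(Y_{i1})-g(Y_{i0})](1-D_i)$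 with $n_1=\sum_iD_i$, $n_0=n-n_1$, let $\hat\pi$ be a consistent estimator of $\pi$, and set the bound estimators $\hat m_g$ and $\hat m_g/(1+\hat\pi)$, with estimated asymptotic standard deviations $\hat\sigma_u$ (for $\hat m_g$) and $\hat\sigma_l=\hat\sigma_u/(1+\hat\pi)$. Let $\hat\sigma=\max\{\hat\sigma_l,\hat\sigma_u\}$, $\hat\mu_{g,l}=\min\{\hat m_g,\hat m_g/(1+\hat\pi)\}$, $\hat\mu_{g,u}=\max\{\hat m_g,\hat m_g/(1+\hat\pi)\}$, let $C_n$ solve $\Phi(C_n+\sqrt n(\hat\mu_{g,u}-\hat\mu_{g,l})/\hat\sigma)-\Phi(-C_n)=\alpha$, and $CS^\mu_\alpha=[\hat\mu_{g,l}-C_n\hat\sigma/\sqrt n,\ \hat\mu_{g,u}+C_n\hat\sigma/\sqrt n]$. *)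

theory Defs
  imports "HOL-Probability.Probability"
begin

definition Phi :: "real \<Rightarrow> real" where
  "Phi x = cdf (density lborel std_normal_density) x"

definition n1 :: "nat \<Rightarrow> (nat \<Rightarrow> real) \<Rightarrow> real" where
  "n1 n D = (\<Sum>i=1..n. D i)"

definition n0 :: "nat \<Rightarrow> (nat \<Rightarrow> real) \<Rightarrow> real" where
  "n0 n D = real n - n1 n D"

definition m_hat :: "(real \<Rightarrow> real) \<Rightarrow> nat \<Rightarrow> (nat \<Rightarrow> real) \<Rightarrow> (nat \<Rightarrow> real) \<Rightarrow> (nat \<Rightarrow> real) \<Rightarrow> real" where
  "m_hat g n D Y0 Y1 =
     (1 / n1 n D) * (\<Sum>i=1..n. (g (Y1 i) - g (Y0 i)) * D i)
   - (1 / n0 n D) * (\<Sum>i=1..n. (g (Y1 i) - g (Y0 i)) * (1 - D i))"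

definition CS_mu :: "nat \<Rightarrow> real \<Rightarrow> real \<Rightarrow> real \<Rightarrow> real \<Rightarrow> real set" where
  "CS_mu n m pih sig_u C =
     (let sig_l = sig_u / (1 + pih);
          sig = max sig_l sig_u;
          mu_l = min m (m / (1 + pih));
          mu_u = max m (m / (1 + pih))
      in {mu_l - C * sig / sqrt (real n) .. mu_u + C * sig / sqrt (real n)})"

definition is_crit_value :: "real \<Rightarrow> nat \<Rightarrow> real \<Rightarrow> real \<Rightarrow> real \<Rightarrow> real \<Rightarrow> bool" where
  "is_crit_value alpha n m pih sig_u C \<longleftrightarrow>
     (let sig_l = sig_u / (1 + pih);
          sig = max sig_l sig_u;
          mu_l = min m (m / (1 + pih));
          mu_u = max m (m / (1 + pih))
      in Phi (C + sqrt (real n) * (mu_u - mu_l) / sig) - Phi (- C) = alpha)"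

end

theory Submission imports Defs begin
lemma Phi_mono: "x \<le> y \<Longrightarrow> Phi x \<le> Phi y"
proof -
  assume "x \<le> y"
  interpret real_distribution std_normal_distribution by (rule real_dist_normal_dist)
  show ?thesis unfolding Phi_def using cdf_nondecreasing[OF \<open>x \<le> y\<close>] .
qed
lemma Phi_strict: "x < y \<Longrightarrow> Phi x < Phi y"
proof -
  assume xy: "x < y"
  interpret real_distribution std_normal_distribution by (rule real_dist_normal_dist)
  have eq: "Phi y - Phi x = measure std_normal_distribution {x<..y}"
    unfolding Phi_def by (rule cdf_diff_eq[OF xy])
  have pos: "\<And>z. std_normal_density z > 0" by (rule normal_density_pos) simp
  have "emeasure std_normal_distribution {x<..y} \<noteq> 0"
  proof
    assume "emeasure std_normal_distribution {x<..y} = 0"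
    hence "(\<integral>\<^sup>+ z. ennreal (std_normal_density z) * indicator {x<..y} z \<partial>lborel) = 0"
      by (simp add: emeasure_density)
    hence "AE z in lborel. ennreal (std_normal_density z) * indicator {x<..y} z = 0"
      by (subst (asm) nn_integral_0_iff_AE) auto
    hence "AE z in lborel. z \<notin> {x<..y}"
      by eventually_elim (auto simp: indicator_def, metis pos less_irrefl)
    hence "emeasure lborel {x<..y} = 0"
      by (subst (asm) AE_iff_measurable[OF _ refl]) (auto simp: greaterThanAtMost_def greaterThan_def atMost_def Int_def)
    thus False using xy by simp
  qed
  hence "measure std_normal_distribution {x<..y} > 0"
    by (simp add: emeasure_eq_measure zero_less_measure_iff)
  with eq show ?thesis by simp
qed
theorem corollary1:
  fixes n :: nat and D Y0 Y1 :: "nat \<Rightarrow> real" and g :: "real \<Rightarrow> real"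
    and mu_g tau_g pi_hat sigma_u_hat alpha t_star C :: real
  assumes D01: "\<forall>i\<in>{1..n}. D i \<in> {0, 1}"
    and treated: "n1 n D > 0" and control: "n0 n D > 0"
    and signs: "mu_g * tau_g < 0"
    and alpha: "0 < alpha" "alpha < 1"
    and pi_hat: "0 < pi_hat" "pi_hat < 1"
    and sigma: "sigma_u_hat > 0"
    and tstar: "Phi t_star - Phi (- t_star / 2) = alpha"
    and C: "is_crit_value alpha n (m_hat g n D Y0 Y1) pi_hat sigma_u_hat C"
    and t_big: "\<bar>sqrt (real n) * m_hat g n D Y0 Y1 / sigma_u_hat\<bar> > t_star"
  shows "0 \<notin> CS_mu n (m_hat g n D Y0 Y1) pi_hat sigma_u_hat C"
proof -
  define m where "m = m_hat g n D Y0 Y1"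
  define p where "p = pi_hat"
  define su where "su = sigma_u_hat"
  define s where "s = sqrt (real n)"
  define w where "w = s * \<bar>m\<bar> / su"
  have p0: "0 < p" "p < 1" using pi_hat by (auto simp: p_def)
  have su0: "su > 0" using sigma by (simp add: su_def)
  have s0: "s \<ge> 0" by (simp add: s_def)
  have sig: "max (su / (1 + p)) su = su"
    using p0 su0 by (simp add: divide_le_eq max_def)
  have diff: "max m (m / (1 + p)) - min m (m / (1 + p)) = \<bar>m\<bar> * p / (1 + p)"
  proof (cases "m \<ge> 0")
    case True
    have "m / (1 + p) \<le> m" using True p0 by (simp add: divide_le_eq distrib_left)
    hence "max m (m / (1 + p)) = m" "min m (m / (1 + p)) = m / (1 + p)" by auto
    moreover have "m - m / (1 + p) = m * p / (1 + p)" using p0 by (simp add: field_simps)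
    ultimately show ?thesis using True by simp
  next
    case False
    have "m \<le> m / (1 + p)" using False p0 by (simp add: le_divide_eq)
    hence "max m (m / (1 + p)) = m / (1 + p)" "min m (m / (1 + p)) = m" by auto
    moreover have "m / (1 + p) - m = - m * p / (1 + p)" using p0 by (simp add: field_simps)
    ultimately show ?thesis using False by simp
  qed
  have Ceq: "Phi (C + w * p / (1 + p)) - Phi (- C) = alpha"
  proof -
    have "s * (\<bar>m\<bar> * p / (1 + p)) / su = w * p / (1 + p)"
      unfolding w_def by (simp add: ac_simps)
    thus ?thesis using C unfolding is_crit_value_def Let_def
      by (simp only: sig diff m_def[symmetric] p_def[symmetric] su_def[symmetric] s_def[symmetric])
  qed
  have tpos: "t_star > 0"
  proof (rule ccontr)
    assume "\<not> t_star > 0"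
    hence "Phi t_star \<le> Phi (- t_star / 2)" by (intro Phi_mono) simp
    thus False using tstar alpha by simp
  qed
  have wt: "w > t_star" using t_big unfolding w_def m_def s_def su_def
    using sigma by (simp add: abs_mult abs_div_pos)
  have Cw: "C < w / (1 + p)"
  proof (rule ccontr)
    assume "\<not> C < w / (1 + p)"
    hence Cge: "C \<ge> w / (1 + p)" by simp
    have p1: "1 + p \<noteq> 0" using p0 by simp
    have "w / (1 + p) + w * p / (1 + p) = w" unfolding add_divide_distrib[symmetric] using p1 by (simp add: nonzero_divide_eq_eq algebra_simps)
    hence "C + w * p / (1 + p) \<ge> w" using Cge by linarith
    hence "Phi w \<le> Phi (C + w * p / (1 + p))" by (rule Phi_mono)
    moreover have "Phi t_star < Phi w" using wt by (rule Phi_strict)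
    moreover have "t_star / 2 < w / (1 + p)"
    proof -
      have "w / 2 < w / (1 + p)" using p0 wt tpos by (intro divide_strict_left_mono) auto
      thus ?thesis using wt by linarith
    qed
    hence "Phi (- C) \<le> Phi (- t_star / 2)" using Cge by (intro Phi_mono) linarith
    ultimately have "alpha > Phi t_star - Phi (- t_star / 2)" using Ceq by linarith
    thus False using tstar by simp
  qed
  have spos: "s > 0" using wt tpos s0 unfolding w_def by (cases "s = 0") auto
  have key: "C * su / s < \<bar>m\<bar> / (1 + p)"
  proof -
    have pp: "0 < 1 + p" using p0 by simp
    have d: "0 < su * (1 + p)" using su0 pp by simp
    have "C < s * \<bar>m\<bar> / (su * (1 + p))" using Cw unfolding w_def by (simp add: divide_divide_eq_left)
    hence "C * (su * (1 + p)) < s * \<bar>m\<bar>" using d by (simp add: less_divide_eq)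
    thus ?thesis using spos pp by (simp add: field_simps)
  qed
  have "0 \<notin> {min m (m / (1 + p)) - C * su / s .. max m (m / (1 + p)) + C * su / s}"
  proof (cases "m \<ge> 0")
    case True
    have "m / (1 + p) \<le> m" using True p0 by (simp add: divide_le_eq distrib_left)
    thus ?thesis using True key by (simp add: min_def)
  next
    case False
    have "m \<le> m / (1 + p)" using False p0 by (simp add: le_divide_eq)
    moreover have "\<bar>m\<bar> / (1 + p) = - (m / (1 + p))" using False by simp
    ultimately show ?thesis using False key by (simp add: max_def)
  qed
  thus ?thesis unfolding CS_mu_def Let_def
    by (simp only: sig m_def[symmetric] p_def[symmetric] su_def[symmetric] s_def[symmetric] not_False_eq_True)
qed

end
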